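(* Let $p$ be an odd prime. Then the edge set of the complete graph $K_{p^4}$ can be partitioned into $(p^4-1)/4$ subgraphs, each isomorphic to $C_{p^2} \square C_{p^2}$.
   Context: $C_n$ denotes the cycle graph on $n$ vertices and $K_m$ the complete graph on $m$ vertices. For graphs $G=(V,E)$ and $G'=(V',E')$, the Cartesian product $G \square G'$ has vertex set $V\times V'$, with $\{(v,v'),(w,w')\}$ an edge iff either $\{v,w\}\in E$ and $v'=w'$, or $v=w$ and $\{v',w'\}\in E'$. Partitioning $K_m$ into copies of $G$ means decomposing its edge set into edge-disjoint subgraphs (on the vertex set of $K_m$) each isomorphic to $G$. *)

theory Defs
  imports "HOL-Computational_Algebra.Primes"
begin

text \<open>A simple graph is a pair (vertex set, set of edges), each edge a 2-element set.\<close>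
type_synonym 'a sgraph = "'a set \<times> 'a set set"

definition verts :: "'a sgraph \<Rightarrow> 'a set" where "verts G = fst G"
definition edges :: "'a sgraph \<Rightarrow> 'a set set" where "edges G = snd G"

text \<open>Cycle C_n on vertices 0..n-1 (meaningful for n >= 3).\<close>
definition cycle_graph :: "nat \<Rightarrow> nat sgraph" where
  "cycle_graph n = ({0..<n}, {{i, (i + 1) mod n} | i. i < n})"

definition complete_graph :: "nat \<Rightarrow> nat sgraph" where
  "complete_graph m = ({0..<m}, {{u, v} | u v. u < m \<and> v < m \<and> u \<noteq> v})"

definition cart_prod :: "'a sgraph \<Rightarrow> 'b sgraph \<Rightarrow> ('a \<times> 'b) sgraph" where
  "cart_prod G H = (verts G \<times> verts H,
     {{(v, x), (w, x)} | v w x. {v, w} \<in> edges G \<and> x \<in> verts H} \<union>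
     {{(v, x), (v, y)} | v x y. v \<in> verts G \<and> {x, y} \<in> edges H})"

definition is_copy :: "'b sgraph \<Rightarrow> 'a sgraph \<Rightarrow> 'a set set \<Rightarrow> bool" where
  "is_copy G K E \<longleftrightarrow> (\<exists>f. inj_on f (verts G) \<and> f ` verts G \<subseteq> verts K \<and>
                          E = (\<lambda>e. f ` e) ` edges G)"

definition edge_partition_into :: "'a sgraph \<Rightarrow> 'b sgraph \<Rightarrow> nat \<Rightarrow> bool" where
  "edge_partition_into K G k \<longleftrightarrow>
     (\<exists>F :: nat \<Rightarrow> 'a set set.
        (\<forall>i<k. is_copy G K (F i)) \<and>
        (\<forall>i<k. \<forall>j<k. i \<noteq> j \<longrightarrow> F i \<inter> F j = {}) \<and>
        (\<Union>i<k. F i) = edges K)"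

end

theory Submission
  imports Defs "HOL-Number_Theory.Residues"
begin

definition al :: "('a \<times> 'a \<Rightarrow> nat) \<Rightarrow> 'a set \<Rightarrow> nat \<Rightarrow> nat \<Rightarrow> bool" where
  "al f A u v \<longleftrightarrow> (\<exists>\<alpha>\<in>A. \<exists>\<alpha>'\<in>A. \<exists>\<beta>\<in>A.
      (u = f (\<alpha>, \<beta>) \<and> v = f (\<alpha>', \<beta>)) \<or> (u = f (\<beta>, \<alpha>) \<and> v = f (\<beta>, \<alpha>')))"

lemma cycle_edge_iff:
  "{v, w} \<in> edges (cycle_graph n) \<longleftrightarrow> (\<exists>i<n. {v, w} = {i, Suc i mod n})"
  unfolding edges_def cycle_graph_def by auto

lemma cart_cycle_edges:
  "edges (cart_prod (cycle_graph n) (cycle_graph n)) =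
     {{(a, b), (Suc a mod n, b)} | a b. a < n \<and> b < n} \<union>
     {{(b, a), (b, Suc a mod n)} | a b. a < n \<and> b < n}"
proof -
  have V: "verts (cycle_graph n) = {0..<n}" by (simp add: verts_def cycle_graph_def)
  have E: "edges (cycle_graph n) = {{i, Suc i mod n} | i. i < n}"
    by (simp add: edges_def cycle_graph_def)
  have A: "{{(v, x), (w, x)} | v w x. {v, w} \<in> {{i, Suc i mod n} | i. i < n} \<and> x \<in> {0..<n}}
        = {{(a, b), (Suc a mod n, b)} | a b. a < n \<and> b < n}" (is "?L = ?R")
  proof (rule Set.set_eqI, rule iffI)
    fix e assume "e \<in> ?L"
    then obtain v w x i where e: "e = {(v, x), (w, x)}" "{v, w} = {i, Suc i mod n}" "i < n" "x < n"
      by auto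
    from e(2) have "e = {(i, x), (Suc i mod n, x)}"
      unfolding e(1) doubleton_eq_iff by auto
    then show "e \<in> ?R" using e(3,4) by (intro CollectI exI[of _ i] exI[of _ x]) simp
  next
    fix e assume "e \<in> ?R" then show "e \<in> ?L" by fastforce
  qed
  have B: "{{(v, x), (v, y)} | v x y. v \<in> {0..<n} \<and> {x, y} \<in> {{i, Suc i mod n} | i. i < n}}
        = {{(b, a), (b, Suc a mod n)} | a b. a < n \<and> b < n}" (is "?L = ?R")
  proof (rule Set.set_eqI, rule iffI)
    fix e assume "e \<in> ?L"
    then obtain v x y i where e: "e = {(v, x), (v, y)}" "{x, y} = {i, Suc i mod n}" "i < n" "v < n"
      by auto
    from e(2) have "e = {(v, i), (v, Suc i mod n)}"
      unfolding e(1) doubleton_eq_iff by auto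
    then show "e \<in> ?R" using e(3,4) by (intro CollectI exI[of _ i] exI[of _ v]) simp
  next
    fix e assume "e \<in> ?R" then show "e \<in> ?L" by fastforce
  qed
  show ?thesis
    unfolding cart_prod_def edges_def[of "(_, _)"] snd_conv V
    using A B unfolding E by simp
qed


lemma pairs1: "{(X, B), (X', B)} = {(Y, C), (Y', C)} \<Longrightarrow> {X, X'} = {Y, Y'}"
  by (auto simp: doubleton_eq_iff)
lemma pairs2: "{(X, B), (X', B)} = {(C, Y), (C, Y')} \<Longrightarrow> X \<noteq> X' \<Longrightarrow> Y \<noteq> Y' \<Longrightarrow> False"
  by (auto simp: doubleton_eq_iff)
lemma pairs3: "{(B, X), (B, X')} = {(C, Y), (C, Y')} \<Longrightarrow> {X, X'} = {Y, Y'}"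
  by (auto simp: doubleton_eq_iff)

lemma kedge: "E = {u, v} \<Longrightarrow> u < N \<Longrightarrow> v < N \<Longrightarrow> u \<noteq> v \<Longrightarrow> E \<in> {{u, v} | u v. u < N \<and> v < N \<and> u \<noteq> v}"
  by blast

lemma core:
  fixes A :: "'a set" and \<phi> :: "nat \<Rightarrow> 'a \<times> 'a \<Rightarrow> nat" and h :: "nat \<Rightarrow> nat \<Rightarrow> 'a"
  assumes n2: "n \<ge> 2" and Kc: "0 < Kc"
    and phi: "\<And>t. t < T \<Longrightarrow> bij_betw (\<phi> t) (A \<times> A) {0..<N}"
    and cover: "\<And>u v. u < N \<Longrightarrow> v < N \<Longrightarrow> u \<noteq> v \<Longrightarrow> \<exists>t<T. al (\<phi> t) A u v"
    and uniq: "\<And>t t' u v. t < T \<Longrightarrow> t' < T \<Longrightarrow> u \<noteq> v \<Longrightarrow> al (\<phi> t) A u v \<Longrightarrow> al (\<phi> t') A u v \<Longrightarrow> t = t'"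
    and hb: "\<And>k. k < Kc \<Longrightarrow> bij_betw (h k) {0..<n} A"
    and hcover: "\<And>x y. x \<in> A \<Longrightarrow> y \<in> A \<Longrightarrow> x \<noteq> y \<Longrightarrow> \<exists>k<Kc. \<exists>a<n. {x, y} = {h k a, h k (Suc a mod n)}"
    and huniq: "\<And>k k' a a'. k < Kc \<Longrightarrow> k' < Kc \<Longrightarrow> a < n \<Longrightarrow> a' < n \<Longrightarrow>
        {h k a, h k (Suc a mod n)} = {h k' a', h k' (Suc a' mod n)} \<Longrightarrow> k = k'"
  shows "edge_partition_into (complete_graph N) (cart_prod (cycle_graph n) (cycle_graph n)) (T * Kc)"
proof -
  define G where "G = cart_prod (cycle_graph n) (cycle_graph n)"
  define g where "g i = (\<lambda>(a, b). \<phi> (i div Kc) (h (i mod Kc) a, h (i mod Kc) b))" for i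
  define F where "F i = (\<lambda>e. g i ` e) ` edges G" for i
  have VG: "verts G = {0..<n} \<times> {0..<n}"
    by (simp add: G_def cart_prod_def verts_def cycle_graph_def)
  have EK: "edges (complete_graph N) = {{u, v} | u v. u < N \<and> v < N \<and> u \<noteq> v}"
    by (simp add: edges_def complete_graph_def)
  have VK: "verts (complete_graph N) = {0..<N}"
    by (simp add: verts_def complete_graph_def)
  have idx: "i div Kc < T" "i mod Kc < Kc" if "i < T * Kc" for i
    using that Kc by (auto simp: less_mult_imp_div_less)
  have sucne: "a \<noteq> Suc a mod n" if "a < n" for a
  proof (cases "Suc a < n")
    case False
    then have "Suc a = n" using that by simp
    then show ?thesis using n2 by auto
  qed simp
  have sucl: "Suc a mod n < n" for a using n2 by simp
  have shape: "\<exists>t<T. \<exists>k<Kc. i = t * Kc + k \<and> (\<exists>a<n. \<exists>b<n.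
      (E = {\<phi> t (h k a, h k b), \<phi> t (h k (Suc a mod n), h k b)} \<or>
       E = {\<phi> t (h k b, h k a), \<phi> t (h k b, h k (Suc a mod n))}))"
    if "i < T * Kc" "E \<in> F i" for i E
  proof -
    from that(2) obtain e where e: "e \<in> edges G" "E = g i ` e" unfolding F_def by blast
    from e(1) have "\<exists>a<n. \<exists>b<n. e = {(a, b), (Suc a mod n, b)} \<or> e = {(b, a), (b, Suc a mod n)}"
      unfolding G_def cart_cycle_edges by blast
    then obtain a b where ab: "a < n" "b < n" "e = {(a, b), (Suc a mod n, b)} \<or> e = {(b, a), (b, Suc a mod n)}"
      by blast
    have "i = (i div Kc) * Kc + i mod Kc" by simp
    moreover have "E = {\<phi> (i div Kc) (h (i mod Kc) a, h (i mod Kc) b), \<phi> (i div Kc) (h (i mod Kc) (Suc a mod n), h (i mod Kc) b)} \<or>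
       E = {\<phi> (i div Kc) (h (i mod Kc) b, h (i mod Kc) a), \<phi> (i div Kc) (h (i mod Kc) b, h (i mod Kc) (Suc a mod n))}"
      using ab(3) unfolding e(2) g_def by auto
    ultimately show ?thesis using idx[OF that(1)] ab(1,2) by blast
  qed
  have alE: "al (\<phi> t) A (\<phi> t (h k a, h k b)) (\<phi> t (h k (Suc a mod n), h k b))"
     "al (\<phi> t) A (\<phi> t (h k b, h k a)) (\<phi> t (h k b, h k (Suc a mod n)))"
    if "k < Kc" "a < n" "b < n" for t k a b
  proof -
    have "h k a \<in> A" "h k b \<in> A" "h k (Suc a mod n) \<in> A"
      using hb[OF that(1)] that(2,3) sucl by (auto simp: bij_betw_def)
    then show "al (\<phi> t) A (\<phi> t (h k a, h k b)) (\<phi> t (h k (Suc a mod n), h k b))"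
      "al (\<phi> t) A (\<phi> t (h k b, h k a)) (\<phi> t (h k b, h k (Suc a mod n)))"
      unfolding al_def by blast+
  qed
  have hA: "h k a \<in> A" if "k < Kc" "a < n" for k a
    using hb[OF that(1)] that(2) by (auto simp: bij_betw_def)
  have hinj: "h k a \<noteq> h k (Suc a mod n)" if "k < Kc" "a < n" for k a
    using hb[OF that(1)] that(2) sucne[OF that(2)] sucl
    by (auto simp: bij_betw_def inj_on_def)
  have phinj: "\<phi> t x = \<phi> t y \<longleftrightarrow> x = y" if "t < T" "x \<in> A \<times> A" "y \<in> A \<times> A" for t x y
    using phi[OF that(1)] that(2,3) by (auto simp: bij_betw_def inj_on_def)
  have phin: "\<phi> t x < N" if "t < T" "x \<in> A \<times> A" for t x
    using phi[OF that(1)] that(2) by (auto simp: bij_betw_def)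
  show ?thesis
    unfolding edge_partition_into_def G_def[symmetric]
  proof (intro exI[of _ F] conjI allI impI)
    fix i assume i: "i < T * Kc"
    show "is_copy G (complete_graph N) (F i)"
      unfolding is_copy_def
    proof (intro exI[of _ "g i"] conjI)
      show "inj_on (g i) (verts G)"
        unfolding VG
      proof (rule inj_onI)
        fix x y assume x: "x \<in> {0..<n} \<times> {0..<n}" and y: "y \<in> {0..<n} \<times> {0..<n}" and eq: "g i x = g i y"
        obtain a b a' b' where xy: "x = (a, b)" "y = (a', b')" by fastforce
        have a: "a < n" "b < n" "a' < n" "b' < n" using x y xy by auto
        have "(h (i mod Kc) a, h (i mod Kc) b) = (h (i mod Kc) a', h (i mod Kc) b')"
          using eq idx[OF i] phinj hA a unfolding g_def xy by auto
        then show "x = y" unfolding xy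
          using hb[OF idx(2)[OF i]] a by (auto simp: bij_betw_def inj_on_def)
      qed
      show "g i ` verts G \<subseteq> verts (complete_graph N)"
        unfolding VG VK g_def using idx[OF i] phin hA by auto
    qed (simp add: F_def)
  next
    fix i j assume i: "i < T * Kc" and j: "j < T * Kc" and ij: "i \<noteq> j"
    show "F i \<inter> F j = {}"
    proof (rule ccontr)
      assume "F i \<inter> F j \<noteq> {}"
      then obtain E where E: "E \<in> F i" "E \<in> F j" by blast
      obtain t k a b where tk: "t < T" "k < Kc" "i = t * Kc + k" "a < n" "b < n"
        and Ei: "E = {\<phi> t (h k a, h k b), \<phi> t (h k (Suc a mod n), h k b)} \<or>
       E = {\<phi> t (h k b, h k a), \<phi> t (h k b, h k (Suc a mod n))}"
        using shape[OF i E(1)] by blast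
      obtain t' k' a' b' where tk': "t' < T" "k' < Kc" "j = t' * Kc + k'" "a' < n" "b' < n"
        and Ej: "E = {\<phi> t' (h k' a', h k' b'), \<phi> t' (h k' (Suc a' mod n), h k' b')} \<or>
       E = {\<phi> t' (h k' b', h k' a'), \<phi> t' (h k' b', h k' (Suc a' mod n))}"
        using shape[OF j E(2)] by blast
      have tt: "t = t'"
      proof -
        have hA3: "h k a \<in> A" "h k b \<in> A" "h k (Suc a mod n) \<in> A" using hA tk sucl by auto
        have "\<exists>u v. E = {u, v} \<and> al (\<phi> t) A u v \<and> u \<noteq> v" using Ei
        proof (elim disjE)
          assume E1: "E = {\<phi> t (h k a, h k b), \<phi> t (h k (Suc a mod n), h k b)}"
          have "\<phi> t (h k a, h k b) \<noteq> \<phi> t (h k (Suc a mod n), h k b)"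
            using phinj[OF tk(1)] hinj[OF tk(2,4)] hA3 by simp
          then show ?thesis using E1 alE(1)[OF tk(2,4,5), of t] by blast
        next
          assume E1: "E = {\<phi> t (h k b, h k a), \<phi> t (h k b, h k (Suc a mod n))}"
          have "\<phi> t (h k b, h k a) \<noteq> \<phi> t (h k b, h k (Suc a mod n))"
            using phinj[OF tk(1)] hinj[OF tk(2,4)] hA3 by simp
          then show ?thesis using E1 alE(2)[OF tk(2,4,5), of t] by blast
        qed
        then obtain u v where uv: "E = {u, v}" "al (\<phi> t) A u v" "u \<noteq> v" by blast
        obtain u' v' where uv': "E = {u', v'}" "al (\<phi> t') A u' v'"
          using Ej alE[OF tk'(2,4,5), of t'] by blast
        have alsym: "al f A x y \<Longrightarrow> al f A y x" for f x y unfolding al_def by blast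
        have "(u = u' \<and> v = v') \<or> (u = v' \<and> v = u')" using uv(1) uv'(1) doubleton_eq_iff by metis
        then have "al (\<phi> t') A u v"
        proof (elim disjE)
          assume "u = u' \<and> v = v'" then show ?thesis using uv'(2) by simp
        next
          assume "u = v' \<and> v = u'" then show ?thesis using alsym[OF uv'(2)] by simp
        qed
        then show ?thesis using uniq[OF tk(1) tk'(1) uv(3) uv(2)] by blast
      qed
      define X where "X = h k a" define X' where "X' = h k (Suc a mod n)" define B where "B = h k b"
      define Y where "Y = h k' a'" define Y' where "Y' = h k' (Suc a' mod n)" define C where "C = h k' b'"
      have inA: "X \<in> A" "X' \<in> A" "B \<in> A" "Y \<in> A" "Y' \<in> A" "C \<in> A"
        unfolding X_def X'_def B_def Y_def Y'_def C_def using hA tk tk' sucl by auto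
      have XX: "X \<noteq> X'" "Y \<noteq> Y'" unfolding X_def X'_def Y_def Y'_def using hinj tk tk' by auto
      have dbl: "{\<phi> t P, \<phi> t Q} = {\<phi> t P', \<phi> t Q'} \<longleftrightarrow> {P, Q} = {P', Q'}"
        if "P \<in> A \<times> A" "Q \<in> A \<times> A" "P' \<in> A \<times> A" "Q' \<in> A \<times> A" for P Q P' Q'
        unfolding doubleton_eq_iff using phinj[OF tk(1)] that by simp
      have "k = k'"
      proof -
        have Ei': "E = {\<phi> t (X, B), \<phi> t (X', B)} \<or> E = {\<phi> t (B, X), \<phi> t (B, X')}"
          using Ei unfolding X_def X'_def B_def by simp
        have Ej': "E = {\<phi> t (Y, C), \<phi> t (Y', C)} \<or> E = {\<phi> t (C, Y), \<phi> t (C, Y')}"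
          using Ej unfolding Y_def Y'_def C_def tt by simp
        from Ei' Ej' have "{X, X'} = {Y, Y'}"
        proof (elim disjE)
          assume "E = {\<phi> t (X, B), \<phi> t (X', B)}" "E = {\<phi> t (Y, C), \<phi> t (Y', C)}"
          then have "{\<phi> t (X, B), \<phi> t (X', B)} = {\<phi> t (Y, C), \<phi> t (Y', C)}" by (simp only:)
          then have "{(X, B), (X', B)} = {(Y, C), (Y', C)}" by (rule dbl[THEN iffD1, rotated 4]) (simp_all add: inA)
          then show ?thesis by (rule pairs1)
        next
          assume "E = {\<phi> t (X, B), \<phi> t (X', B)}" "E = {\<phi> t (C, Y), \<phi> t (C, Y')}"
          then have "{\<phi> t (X, B), \<phi> t (X', B)} = {\<phi> t (C, Y), \<phi> t (C, Y')}" by (simp only:)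
          then have "{(X, B), (X', B)} = {(C, Y), (C, Y')}" by (rule dbl[THEN iffD1, rotated 4]) (simp_all add: inA)
          from pairs2[OF this XX(1) XX(2)] show ?thesis by (rule FalseE)
        next
          assume "E = {\<phi> t (Y, C), \<phi> t (Y', C)}" "E = {\<phi> t (B, X), \<phi> t (B, X')}"
          then have "{\<phi> t (Y, C), \<phi> t (Y', C)} = {\<phi> t (B, X), \<phi> t (B, X')}" by (simp only:)
          then have "{(Y, C), (Y', C)} = {(B, X), (B, X')}" by (rule dbl[THEN iffD1, rotated 4]) (simp_all add: inA)
          from pairs2[OF this XX(2) XX(1)] show ?thesis by (rule FalseE)
        next
          assume "E = {\<phi> t (B, X), \<phi> t (B, X')}" "E = {\<phi> t (C, Y), \<phi> t (C, Y')}"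
          then have "{\<phi> t (B, X), \<phi> t (B, X')} = {\<phi> t (C, Y), \<phi> t (C, Y')}" by (simp only:)
          then have "{(B, X), (B, X')} = {(C, Y), (C, Y')}" by (rule dbl[THEN iffD1, rotated 4]) (simp_all add: inA)
          then show ?thesis by (rule pairs3)
        qed
        then show ?thesis using huniq[OF tk(2) tk'(2) tk(4) tk'(4)] unfolding X_def X'_def Y_def Y'_def by blast
      qed
      then have "i = j" using tk(3) tk'(3) tt by simp
      then show False using ij by simp
    qed
  next
    show "(\<Union>i<T * Kc. F i) = edges (complete_graph N)"
    proof (rule Set.set_eqI, rule iffI)
      fix E assume "E \<in> (\<Union>i<T * Kc. F i)"
      then obtain i where i: "i < T * Kc" "E \<in> F i" by blast
      obtain t k a b where tk: "t < T" "k < Kc" "i = t * Kc + k" "a < n" "b < n"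
        and Ei: "E = {\<phi> t (h k a, h k b), \<phi> t (h k (Suc a mod n), h k b)} \<or>
       E = {\<phi> t (h k b, h k a), \<phi> t (h k b, h k (Suc a mod n))}"
        using shape[OF i] by blast
      have inA: "h k a \<in> A" "h k b \<in> A" "h k (Suc a mod n) \<in> A" using hA tk sucl by auto
      show "E \<in> edges (complete_graph N)"
        unfolding EK using Ei
      proof (elim disjE)
        assume "E = {\<phi> t (h k a, h k b), \<phi> t (h k (Suc a mod n), h k b)}"
        then show "E \<in> {{u, v} | u v. u < N \<and> v < N \<and> u \<noteq> v}"
          using phin[OF tk(1)] phinj[OF tk(1)] hinj[OF tk(2,4)] inA by (intro kedge) auto
      next
        assume "E = {\<phi> t (h k b, h k a), \<phi> t (h k b, h k (Suc a mod n))}"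
        then show "E \<in> {{u, v} | u v. u < N \<and> v < N \<and> u \<noteq> v}"
          using phin[OF tk(1)] phinj[OF tk(1)] hinj[OF tk(2,4)] inA by (intro kedge) auto
      qed
    next
      fix E assume "E \<in> edges (complete_graph N)"
      then obtain u v where uv: "E = {u, v}" "u < N" "v < N" "u \<noteq> v" unfolding EK by blast
      obtain t where t: "t < T" "al (\<phi> t) A u v" using cover[OF uv(2-4)] by blast
      then obtain \<alpha> \<alpha>' \<beta> where ab: "\<alpha> \<in> A" "\<alpha>' \<in> A" "\<beta> \<in> A"
        and cs: "(u = \<phi> t (\<alpha>, \<beta>) \<and> v = \<phi> t (\<alpha>', \<beta>)) \<or> (u = \<phi> t (\<beta>, \<alpha>) \<and> v = \<phi> t (\<beta>, \<alpha>'))"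
        unfolding al_def by blast
      have "\<alpha> \<noteq> \<alpha>'" using cs uv(4) by auto
      then obtain k a where ka: "k < Kc" "a < n" "{\<alpha>, \<alpha>'} = {h k a, h k (Suc a mod n)}"
        using hcover[OF ab(1,2)] by blast
      obtain b where b: "b < n" "\<beta> = h k b"
        using hb[OF ka(1)] ab(3) unfolding bij_betw_def by (metis atLeastLessThan_iff imageE)
      define i where "i = t * Kc + k"
      have i: "i < T * Kc" "i div Kc = t" "i mod Kc = k"
      proof -
        have "i < t * Kc + Kc" unfolding i_def using ka(1) by simp
        also have "\<dots> = Suc t * Kc" by simp
        also have "\<dots> \<le> T * Kc" using t(1) by (intro mult_le_mono1) simp
        finally show "i < T * Kc" .
        show "i div Kc = t" "i mod Kc = k" unfolding i_def using ka(1) Kc by simp_all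
      qed
      have e1: "{(a, b), (Suc a mod n, b)} \<in> edges G" "{(b, a), (b, Suc a mod n)} \<in> edges G"
        unfolding G_def cart_cycle_edges using ka(2) b(1) by blast+
      from cs show "E \<in> (\<Union>i<T * Kc. F i)"
      proof
        assume c: "u = \<phi> t (\<alpha>, \<beta>) \<and> v = \<phi> t (\<alpha>', \<beta>)"
        have "E = g i ` {(a, b), (Suc a mod n, b)}"
          using ka(3) c uv(1) unfolding g_def i(2,3) b(2) doubleton_eq_iff by auto
        then show ?thesis using i(1) e1(1) unfolding F_def by blast
      next
        assume c: "u = \<phi> t (\<beta>, \<alpha>) \<and> v = \<phi> t (\<beta>, \<alpha>')"
        have "E = g i ` {(b, a), (b, Suc a mod n)}"
          using ka(3) c uv(1) unfolding g_def i(2,3) b(2) doubleton_eq_iff by auto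
        then show ?thesis using i(1) e1(2) unfolding F_def by blast
      qed
    qed
  qed
qed



definition zz :: "nat \<Rightarrow> int" where
  "zz j = (if even j then - int (j div 2) else int ((j + 1) div 2))"

definition ww :: "nat \<Rightarrow> nat \<Rightarrow> nat \<Rightarrow> nat" where
  "ww m k a = (if a = 0 then 2 * m else nat ((int k + zz (a - 1)) mod int (2 * m)))"

lemma zz_bounds: "j < 2 * m \<Longrightarrow> - int m < zz j \<and> zz j \<le> int m"
  unfolding zz_def by auto

lemma zz_inj: "zz j = zz j' \<Longrightarrow> j = j'"
  unfolding zz_def by (auto split: if_splits) presburger

lemma zz_sum: "zz j + zz (Suc j) = int (Suc j mod 2)"
  unfolding zz_def by auto

lemma mod_eqI_int: "0 \<le> v \<Longrightarrow> v < M \<Longrightarrow> M dvd (u - v) \<Longrightarrow> u mod M = (v::int)"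
  by (metis mod_eq_dvd_iff mod_pos_pos_trivial)

lemma dvd_small_int: "(M::int) dvd t \<Longrightarrow> \<bar>t\<bar> < M \<Longrightarrow> t = 0"
  using dvd_imp_le_int by force

lemma ww_lt: "0 < m \<Longrightarrow> a \<noteq> 0 \<Longrightarrow> ww m k a < 2 * m"
  unfolding ww_def by (simp add: nat_less_iff)

lemma ww_0: "k < m \<Longrightarrow> ww m k 0 = 2 * m" by (simp add: ww_def)
lemma ww_1: "k < m \<Longrightarrow> ww m k 1 = k" by (simp add: ww_def zz_def)
lemma ww_2m: "k < m \<Longrightarrow> ww m k (2 * m) = k + m"
proof -
  assume k: "k < m"
  then have m: "m \<ge> 1" by simp
  have "odd (2 * m - 1)" using m by simp
  then have "zz (2 * m - 1) = int m" unfolding zz_def using m by simp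
  then show ?thesis using k m unfolding ww_def
    by (simp add: mod_pos_pos_trivial nat_add_distrib)
qed

lemma ww_suc: "ww m k (Suc j) = nat ((int k + zz j) mod int (2 * m))"
  by (simp add: ww_def)

lemma ww_inj:
  assumes m: "0 < m"
  shows "inj_on (ww m k) {0..<2 * m + 1}"
proof (rule inj_onI)
  fix a a' assume a: "a \<in> {0..<2 * m + 1}" and a': "a' \<in> {0..<2 * m + 1}" and eq: "ww m k a = ww m k a'"
  show "a = a'"
  proof (cases "a = 0 \<or> a' = 0")
    case True
    have z: "ww m k b = 2 * m \<longleftrightarrow> b = 0" for b
      using ww_lt[OF m, of b k] by (cases "b = 0") (auto simp: ww_def)
    have "a = 0 \<longleftrightarrow> a' = 0" using z[of a] z[of a'] eq by simp
    then show ?thesis using True by simp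
  next
    case False
    then obtain j j' where j: "a = Suc j" "a' = Suc j'" by (metis not0_implies_Suc)
    have jl: "j < 2 * m" "j' < 2 * m" using a a' j by auto
    define M where "M = int (2 * m)"
    have M: "M > 0" using m unfolding M_def by simp
    have "(int k + zz j) mod M = (int k + zz j') mod M"
      using eq unfolding j ww_suc M_def[symmetric] using M
      by (subst (asm) eq_nat_nat_iff) auto
    then have "M dvd (zz j - zz j')"
      by (auto simp: mod_eq_dvd_iff)
    moreover have "\<bar>zz j - zz j'\<bar> < M" using zz_bounds[OF jl(1)] zz_bounds[OF jl(2)] unfolding M_def by auto
    ultimately have "zz j = zz j'" using dvd_small_int[of M "zz j - zz j'"] by simp
    then show ?thesis using zz_inj[of j j'] j by simp
  qed
qed

lemma ww_bij:
  assumes m: "0 < m" and k: "k < m"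
  shows "bij_betw (ww m k) {0..<2 * m + 1} {0..<2 * m + 1}"
proof -
  have sub: "ww m k ` {0..<2 * m + 1} \<subseteq> {0..<2 * m + 1}"
  proof (rule image_subsetI)
    fix a show "ww m k a \<in> {0..<2 * m + 1}" using ww_lt[OF m, of a k] by (cases "a = 0") (auto simp: ww_def)
  qed
  show ?thesis unfolding bij_betw_def using ww_inj[OF m] endo_inj_surj[OF _ sub] by simp
qed

lemma zz_ev: "zz (2 * i) = - int i" unfolding zz_def by simp
lemma zz_od: "zz (Suc (2 * i)) = int i + 1" unfolding zz_def by simp

lemma cover_int:
  fixes M K X Y r :: int and m :: nat
  assumes M: "M = int (2 * m)" and m: "m \<ge> 1"
    and X: "0 \<le> X" "X < M" and Y: "0 \<le> Y" "Y < M" and XY: "X \<noteq> Y"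
    and s: "2 * K + r = (X + Y) mod M" and r: "r = 0 \<or> r = 1"
  shows "\<exists>j. Suc j < 2 * m \<and> (((K + zz j) mod M = X \<and> (K + zz (Suc j)) mod M = Y) \<or>
                             ((K + zz j) mod M = Y \<and> (K + zz (Suc j)) mod M = X))"
proof -
  define d where "d = (X - K) mod M"
  have Mp: "M > 0" using M m by simp
  have d: "0 \<le> d" "d < M" unfolding d_def using Mp by auto
  obtain q where q: "X - K = d + M * q" unfolding d_def
    by (metis add.commute div_mult_mod_eq mult.commute)
  obtain q2 where q2: "X + Y = 2 * K + r + M * q2" using s
    by (metis add.commute div_mult_mod_eq mult.commute)
  have eqI: "(K + c) mod M = V" if "0 \<le> V" "V < M" "K + c - V = M * w" for c V w
    using that by (intro mod_eqI_int) auto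
  show ?thesis
  proof (cases "r = 0")
    case r0: True
    have "d \<noteq> 0"
    proof
      assume "d = 0"
      then have "X - Y = M * (2 * q - q2)" using q q2 r0 by (simp add: algebra_simps)
      then have "X - Y = 0" using X Y by (intro dvd_small_int[of M]) auto
      then show False using XY by simp
    qed
    moreover have "d \<noteq> int m"
    proof
      assume "d = int m"
      then have "X - Y = M * (2 * q - q2 + 1)" using q q2 r0 M by (simp add: algebra_simps)
      then have "X - Y = 0" using X Y by (intro dvd_small_int[of M]) auto
      then show False using XY by simp
    qed
    ultimately consider "1 \<le> d" "d < int m" | "int m < d" using d by linarith
    then show ?thesis
    proof cases
      case 1
      define i where "i = nat (d - 1)"
      have i: "d = int i + 1" using 1 unfolding i_def by simp
      define j where "j = Suc (2 * i)"
      have j: "zz j = d" "zz (Suc j) = - d" "Suc j < 2 * m"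
        using i 1 unfolding j_def using zz_od[of i] zz_ev[of "Suc i"] by auto
      have "(K + zz j) mod M = X" unfolding j
        by (rule eqI[where w="- q"]) (use X q in \<open>auto simp: algebra_simps\<close>)
      moreover have "(K + zz (Suc j)) mod M = Y" unfolding j
        by (rule eqI[where w="q - q2"]) (use Y q q2 r0 in \<open>auto simp: algebra_simps\<close>)
      ultimately show ?thesis using j(3) by blast
    next
      case 2
      define i where "i = nat (M - d - 1)"
      have i: "M - d = int i + 1" using 2 d unfolding i_def by simp
      define j where "j = Suc (2 * i)"
      have j: "zz j = M - d" "zz (Suc j) = - (M - d)" "Suc j < 2 * m"
        using i 2 M unfolding j_def using zz_od[of i] zz_ev[of "Suc i"] by auto
      have "(K + zz j) mod M = Y" unfolding j
        by (rule eqI[where w="1 + q - q2"]) (use Y q q2 r0 in \<open>auto simp: algebra_simps\<close>)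
      moreover have "(K + zz (Suc j)) mod M = X" unfolding j
        by (rule eqI[where w="- 1 - q"]) (use X q in \<open>auto simp: algebra_simps\<close>)
      ultimately show ?thesis using j(3) by blast
    qed
  next
    case False
    then have r1: "r = 1" using r by simp
    consider "d = 0" | "1 \<le> d" "d \<le> int m" | "int m < d" using d by linarith
    then show ?thesis
    proof cases
      case 1
      have j: "zz 0 = 0" "zz (Suc 0) = 1" "Suc 0 < 2 * m" using m by (auto simp: zz_def)
      have "(K + zz 0) mod M = X" unfolding j
        by (rule eqI[where w="- q"]) (use X q 1 in \<open>auto simp: algebra_simps\<close>)
      moreover have "(K + zz (Suc 0)) mod M = Y" unfolding j
        by (rule eqI[where w="q - q2"]) (use Y q q2 r1 1 in \<open>auto simp: algebra_simps\<close>)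
      ultimately show ?thesis using j(3) by blast
    next
      case 2
      define i where "i = nat (d - 1)"
      have i: "d = int i + 1" using 2 unfolding i_def by simp
      define j where "j = 2 * i"
      have j: "zz j = 1 - d" "zz (Suc j) = d" "Suc j < 2 * m"
        using i 2 unfolding j_def using zz_od[of i] zz_ev[of i] by auto
      have "(K + zz j) mod M = Y" unfolding j
        by (rule eqI[where w="q - q2"]) (use Y q q2 r1 in \<open>auto simp: algebra_simps\<close>)
      moreover have "(K + zz (Suc j)) mod M = X" unfolding j
        by (rule eqI[where w="- q"]) (use X q in \<open>auto simp: algebra_simps\<close>)
      ultimately show ?thesis using j(3) by blast
    next
      case 3
      define i where "i = nat (M - d)"
      have i: "M - d = int i" using 3 d unfolding i_def by simp
      define j where "j = 2 * i"
      have j: "zz j = d - M" "zz (Suc j) = M - d + 1" "Suc j < 2 * m"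
        using i 3 M unfolding j_def using zz_od[of i] zz_ev[of i] by auto
      have "(K + zz j) mod M = X" unfolding j
        by (rule eqI[where w="- q - 1"]) (use X q in \<open>auto simp: algebra_simps\<close>)
      moreover have "(K + zz (Suc j)) mod M = Y" unfolding j
        by (rule eqI[where w="1 + q - q2"]) (use Y q q2 r1 in \<open>auto simp: algebra_simps\<close>)
      ultimately show ?thesis using j(3) by blast
    qed
  qed
qed


lemma ww_sum:
  assumes k: "k < m" and j: "Suc j < 2 * m"
  shows "(int (ww m k (Suc j)) + int (ww m k (Suc (Suc j)))) mod int (2 * m) = 2 * int k + int (Suc j mod 2)"
proof -
  define M where "M = int (2 * m)"
  have M: "M > 0" using k unfolding M_def by simp
  have "int (ww m k (Suc j)) + int (ww m k (Suc (Suc j))) = (int k + zz j) mod M + (int k + zz (Suc j)) mod M"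
    unfolding ww_suc M_def[symmetric] using M by simp
  then have "(int (ww m k (Suc j)) + int (ww m k (Suc (Suc j)))) mod M = ((int k + zz j) + (int k + zz (Suc j))) mod M"
    by (simp only: mod_add_eq)
  also have "\<dots> = (2 * int k + (zz j + zz (Suc j))) mod M"
    by (rule arg_cong[where f="\<lambda>x. x mod M"]) simp
  also have "\<dots> = 2 * int k + int (Suc j mod 2)"
  proof -
    have b: "int (Suc j mod 2) \<le> 1" by simp
    show ?thesis unfolding zz_sum using k b M_def by (intro mod_pos_pos_trivial) auto
  qed
  finally show ?thesis unfolding M_def .
qed

lemma ww_E0: "k < m \<Longrightarrow> {ww m k 0, ww m k (Suc 0 mod (2 * m + 1))} = {2 * m, k}"
  using ww_0 ww_1 by auto

lemma ww_E2m: "k < m \<Longrightarrow> {ww m k (2 * m), ww m k (Suc (2 * m) mod (2 * m + 1))} = {k + m, 2 * m}"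
  using ww_0 ww_2m by auto

lemma ww_cases:
  assumes "a < 2 * m + 1"
  obtains "a = 0" | "a = 2 * m" | j where "a = Suc j" "Suc j < 2 * m" "Suc a mod (2 * m + 1) = Suc (Suc j)"
proof (cases a)
  case 0 then show ?thesis using that(1) by simp
next
  case (Suc j)
  show ?thesis
  proof (cases "Suc j = 2 * m")
    case True then show ?thesis using that(2) Suc by simp
  next
    case False
    then have "Suc j < 2 * m" using assms Suc by simp
    then show ?thesis using that(3)[of j] Suc by simp
  qed
qed

lemma two_k: "2 * (k::int) + r = 2 * k' + r' \<Longrightarrow> 0 \<le> r \<Longrightarrow> r \<le> 1 \<Longrightarrow> 0 \<le> r' \<Longrightarrow> r' \<le> 1 \<Longrightarrow> k = k'"
  by presburger

lemma uniq_aux: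
  fixes k k' m :: nat
  assumes "A = {2 * m, k} \<or> A = {k + m, 2 * m}" "A = {2 * m, k'} \<or> A = {k' + m, 2 * m}"
    "k < m" "k' < m"
  shows "k = k'"
  using assms(1,2)
proof (elim disjE)
  assume "A = {2 * m, k}" "A = {2 * m, k'}"
  then have "{2 * m, k} = {2 * m, k'}" by simp
  then show ?thesis using assms(3,4) unfolding doubleton_eq_iff by auto
next
  assume "A = {2 * m, k}" "A = {k' + m, 2 * m}"
  then have "{2 * m, k} = {k' + m, 2 * m}" by simp
  then show ?thesis using assms(3,4) unfolding doubleton_eq_iff by auto
next
  assume "A = {k + m, 2 * m}" "A = {2 * m, k'}"
  then have "{k + m, 2 * m} = {2 * m, k'}" by simp
  then show ?thesis using assms(3,4) unfolding doubleton_eq_iff by auto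
next
  assume "A = {k + m, 2 * m}" "A = {k' + m, 2 * m}"
  then have "{k + m, 2 * m} = {k' + m, 2 * m}" by simp
  then show ?thesis using assms(3,4) unfolding doubleton_eq_iff by auto
qed

lemma ww_uniq:
  assumes k: "k < m" "k' < m" and a: "a < 2 * m + 1" "a' < 2 * m + 1"
    and eq: "{ww m k a, ww m k (Suc a mod (2 * m + 1))} = {ww m k' a', ww m k' (Suc a' mod (2 * m + 1))}"
  shows "k = k'"
proof -
  have m: "0 < m" using k by simp
  have spec: "2 * m \<in> {ww m k a, ww m k (Suc a mod (2 * m + 1))} \<longleftrightarrow> a = 0 \<or> a = 2 * m"
    if "a < 2 * m + 1" "k < m" for a k
    using that(1)
  proof (cases rule: ww_cases)
    case 1 then show ?thesis using ww_E0[OF that(2)] by simp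
  next
    case 2 then show ?thesis using ww_E2m[OF that(2)] by simp
  next
    case (3 j)
    then show ?thesis using ww_lt[OF m, of "Suc j" k] ww_lt[OF m, of "Suc (Suc j)" k] by auto
  qed
  show ?thesis
  proof (cases "a = 0 \<or> a = 2 * m")
    case True
    then have "2 * m \<in> {ww m k a, ww m k (Suc a mod (2 * m + 1))}" using spec[OF a(1) k(1)] by blast
    with eq have "2 * m \<in> {ww m k' a', ww m k' (Suc a' mod (2 * m + 1))}" by (rule subst)
    then have "a' = 0 \<or> a' = 2 * m" using spec[OF a(2) k(2)] by blast
    have S: "{ww m k a, ww m k (Suc a mod (2 * m + 1))} = {2 * m, k} \<or>
             {ww m k a, ww m k (Suc a mod (2 * m + 1))} = {k + m, 2 * m}"
      using True
    proof
      assume "a = 0" then show ?thesis using ww_E0[OF k(1)] by simp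
    next
      assume "a = 2 * m" then show ?thesis using ww_E2m[OF k(1)] by simp
    qed
    have S': "{ww m k' a', ww m k' (Suc a' mod (2 * m + 1))} = {2 * m, k'} \<or>
             {ww m k' a', ww m k' (Suc a' mod (2 * m + 1))} = {k' + m, 2 * m}"
      using \<open>a' = 0 \<or> a' = 2 * m\<close>
    proof
      assume "a' = 0" then show ?thesis using ww_E0[OF k(2)] by simp
    next
      assume "a' = 2 * m" then show ?thesis using ww_E2m[OF k(2)] by simp
    qed
    from S S' show ?thesis unfolding eq using k by (rule uniq_aux)
  next
    case False
    then have "2 * m \<notin> {ww m k a, ww m k (Suc a mod (2 * m + 1))}" using spec[OF a(1) k(1)] by blast
    with eq have "2 * m \<notin> {ww m k' a', ww m k' (Suc a' mod (2 * m + 1))}" by (rule subst)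
    then have F': "\<not> (a' = 0 \<or> a' = 2 * m)" using spec[OF a(2) k(2)] by blast
    from a(1) False obtain j where j: "a = Suc j" "Suc j < 2 * m" "Suc a mod (2 * m + 1) = Suc (Suc j)"
      by (cases rule: ww_cases) auto
    from a(2) F' obtain j' where j': "a' = Suc j'" "Suc j' < 2 * m" "Suc a' mod (2 * m + 1) = Suc (Suc j')"
      by (cases rule: ww_cases) auto
    have "{ww m k (Suc j), ww m k (Suc (Suc j))} = {ww m k' (Suc j'), ww m k' (Suc (Suc j'))}"
      using eq j(3) j'(3) unfolding j(1) j'(1) by simp
    then have "ww m k (Suc j) + ww m k (Suc (Suc j)) = ww m k' (Suc j') + ww m k' (Suc (Suc j'))"
      unfolding doubleton_eq_iff by auto
    then have "int (ww m k (Suc j)) + int (ww m k (Suc (Suc j))) = int (ww m k' (Suc j')) + int (ww m k' (Suc (Suc j')))"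
      by (simp only: of_nat_add[symmetric])
    then have e2: "2 * int k + int (Suc j mod 2) = 2 * int k' + int (Suc j' mod 2)"
      using ww_sum[OF k(1) j(2)] ww_sum[OF k(2) j'(2)] by simp
    have rr: "int (Suc j mod 2) \<le> 1" "int (Suc j' mod 2) \<le> 1" "0 \<le> int (Suc j mod 2)" "0 \<le> int (Suc j' mod 2)" by simp_all
    have "int k = int k'" using two_k[OF e2 rr(3) rr(1) rr(4) rr(2)] .
    then show ?thesis by simp
  qed
qed

lemma ex2I: "k < m \<Longrightarrow> a < n \<Longrightarrow> P k a \<Longrightarrow> \<exists>k<m. \<exists>a<n. P k a" by blast

lemma ww_cover:
  assumes m: "0 < m" and xy: "x < 2 * m + 1" "y < 2 * m + 1" "x \<noteq> y"
  shows "\<exists>k<m. \<exists>a<2 * m + 1. {x, y} = {ww m k a, ww m k (Suc a mod (2 * m + 1))}"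
proof -
  have spec: "\<exists>k<m. \<exists>a<2 * m + 1. {2 * m, y} = {ww m k a, ww m k (Suc a mod (2 * m + 1))}"
    if "y < 2 * m" for y
  proof (cases "y < m")
    case True
    have "{2 * m, y} = {ww m y 0, ww m y (Suc 0 mod (2 * m + 1))}" using ww_E0[OF True] by simp
    from ex2I[where P="\<lambda>k a. {2 * m, y} = {ww m k a, ww m k (Suc a mod (2 * m + 1))}", OF True _ this]
    show ?thesis by simp
  next
    case False
    then have k: "y - m < m" using that by simp
    have "{2 * m, y} = {ww m (y - m) (2 * m), ww m (y - m) (Suc (2 * m) mod (2 * m + 1))}"
      using ww_E2m[OF k] False by (simp add: insert_commute)
    from ex2I[where P="\<lambda>k a. {2 * m, y} = {ww m k a, ww m k (Suc a mod (2 * m + 1))}", OF k _ this]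
    show ?thesis by simp
  qed
  show ?thesis
  proof (cases "x = 2 * m \<or> y = 2 * m")
    case True
    then show ?thesis
    proof
      assume x: "x = 2 * m"
      then have "y < 2 * m" using xy by simp
      then show ?thesis using spec[of y] x by simp
    next
      assume y: "y = 2 * m"
      then have "x < 2 * m" using xy by simp
      moreover have "{x, y} = {2 * m, x}" using y by (simp add: insert_commute)
      ultimately show ?thesis using spec[of x] by simp
    qed
  next
    case False
    then have xy2: "x < 2 * m" "y < 2 * m" using xy by auto
    define M where "M = int (2 * m)"
    define s where "s = (int x + int y) mod M"
    define K where "K = s div 2"
    define r where "r = s mod 2"
    have M: "M > 0" unfolding M_def using m by simp
    have s: "0 \<le> s" "s < M" unfolding s_def using M by auto
    have K: "0 \<le> K" "K < int m" unfolding K_def using s M_def by auto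
    have sK: "2 * K + r = (int x + int y) mod M" unfolding K_def r_def s_def by simp
    have r: "r = 0 \<or> r = 1" unfolding r_def by auto
    have xyM: "0 \<le> int x" "int x < M" "0 \<le> int y" "int y < M" "int x \<noteq> int y"
      using xy2 xy(3) unfolding M_def by auto
    obtain j where j: "Suc j < 2 * m" and
      c: "((K + zz j) mod M = int x \<and> (K + zz (Suc j)) mod M = int y) \<or>
          ((K + zz j) mod M = int y \<and> (K + zz (Suc j)) mod M = int x)"
      using cover_int[OF M_def _ xyM sK r] m by auto
    define k where "k = nat K"
    have k: "k < m" "int k = K" unfolding k_def using K by auto
    have a: "Suc j < 2 * m + 1" "Suc (Suc j) mod (2 * m + 1) = Suc (Suc j)" using j by auto
    have w: "ww m k (Suc j) = nat ((K + zz j) mod M)" "ww m k (Suc (Suc j)) = nat ((K + zz (Suc j)) mod M)"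
      unfolding ww_suc k(2) M_def by simp_all
    have "{x, y} = {ww m k (Suc j), ww m k (Suc (Suc j))}"
      using c
    proof
      assume "(K + zz j) mod M = int x \<and> (K + zz (Suc j)) mod M = int y"
      then show ?thesis unfolding w by simp
    next
      assume "(K + zz j) mod M = int y \<and> (K + zz (Suc j)) mod M = int x"
      then show ?thesis unfolding w by (simp add: insert_commute)
    qed
    then have "{x, y} = {ww m k (Suc j), ww m k (Suc (Suc j) mod (2 * m + 1))}" using a(2) by simp
    from ex2I[where P="\<lambda>k a. {x, y} = {ww m k a, ww m k (Suc a mod (2 * m + 1))}", OF k(1) a(1) this]
    show ?thesis .
  qed
qed

lemma walecki:
  assumes "n = 2 * m + 1" "m \<ge> 1"
  shows "\<exists>h :: nat \<Rightarrow> nat \<Rightarrow> nat. (\<forall>k<m. bij_betw (h k) {0..<n} {0..<n}) \<and>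
    (\<forall>x<n. \<forall>y<n. x \<noteq> y \<longrightarrow> (\<exists>k<m. \<exists>a<n. {x, y} = {h k a, h k (Suc a mod n)})) \<and>
    (\<forall>k k' a a'. k < m \<longrightarrow> k' < m \<longrightarrow> a < n \<longrightarrow> a' < n \<longrightarrow>
       {h k a, h k (Suc a mod n)} = {h k' a', h k' (Suc a' mod n)} \<longrightarrow> k = k')"
  using assms ww_bij ww_cover ww_uniq by (intro exI[of _ "ww m"]) auto



context field
begin

definition qe :: "'a \<Rightarrow> ('a \<times> 'a) ring" where
  "qe d = \<lparr>carrier = carrier R \<times> carrier R,
     monoid.mult = (\<lambda>x y. (fst x \<otimes> fst y \<oplus> d \<otimes> (snd x \<otimes> snd y), fst x \<otimes> snd y \<oplus> snd x \<otimes> fst y)),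
     one = (\<one>, \<zero>), zero = (\<zero>, \<zero>),
     add = (\<lambda>x y. (fst x \<oplus> fst y, snd x \<oplus> snd y))\<rparr>"

lemma qe_cring:
  assumes d: "d \<in> carrier R"
  shows "cring (qe d)"
proof (intro cringI abelian_groupI comm_monoidI)
  fix x y z assume x: "x \<in> carrier (qe d)" and y: "y \<in> carrier (qe d)" and z: "z \<in> carrier (qe d)"
  obtain a b where ab: "x = (a, b)" "a \<in> carrier R" "b \<in> carrier R" using x by (auto simp: qe_def)
  obtain a' b' where ab': "y = (a', b')" "a' \<in> carrier R" "b' \<in> carrier R" using y by (auto simp: qe_def)
  obtain a'' b'' where ab'': "z = (a'', b'')" "a'' \<in> carrier R" "b'' \<in> carrier R" using z by (auto simp: qe_def)
  show "x \<oplus>\<^bsub>qe d\<^esub> y \<oplus>\<^bsub>qe d\<^esub> z = x \<oplus>\<^bsub>qe d\<^esub> (y \<oplus>\<^bsub>qe d\<^esub> z)"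
    using ab ab' ab'' by (simp add: qe_def a_assoc)
  show "x \<otimes>\<^bsub>qe d\<^esub> y \<otimes>\<^bsub>qe d\<^esub> z = x \<otimes>\<^bsub>qe d\<^esub> (y \<otimes>\<^bsub>qe d\<^esub> z)"
    using ab ab' ab'' d by (simp add: qe_def) algebra
  show "(x \<oplus>\<^bsub>qe d\<^esub> y) \<otimes>\<^bsub>qe d\<^esub> z = x \<otimes>\<^bsub>qe d\<^esub> z \<oplus>\<^bsub>qe d\<^esub> y \<otimes>\<^bsub>qe d\<^esub> z"
    using ab ab' ab'' d by (simp add: qe_def) algebra
next
  fix x y assume x: "x \<in> carrier (qe d)" and y: "y \<in> carrier (qe d)"
  obtain a b where ab: "x = (a, b)" "a \<in> carrier R" "b \<in> carrier R" using x by (auto simp: qe_def)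
  obtain a' b' where ab': "y = (a', b')" "a' \<in> carrier R" "b' \<in> carrier R" using y by (auto simp: qe_def)
  show "x \<oplus>\<^bsub>qe d\<^esub> y \<in> carrier (qe d)" using ab ab' by (simp add: qe_def)
  show "x \<otimes>\<^bsub>qe d\<^esub> y \<in> carrier (qe d)" using ab ab' d by (simp add: qe_def)
  show "x \<oplus>\<^bsub>qe d\<^esub> y = y \<oplus>\<^bsub>qe d\<^esub> x" using ab ab' by (simp add: qe_def a_comm)
  show "x \<otimes>\<^bsub>qe d\<^esub> y = y \<otimes>\<^bsub>qe d\<^esub> x" using ab ab' d by (simp add: qe_def) algebra
next
  fix x assume x: "x \<in> carrier (qe d)"
  obtain a b where ab: "x = (a, b)" "a \<in> carrier R" "b \<in> carrier R" using x by (auto simp: qe_def)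
  show "\<zero>\<^bsub>qe d\<^esub> \<oplus>\<^bsub>qe d\<^esub> x = x" using ab by (simp add: qe_def)
  show "\<one>\<^bsub>qe d\<^esub> \<otimes>\<^bsub>qe d\<^esub> x = x" using ab d by (simp add: qe_def)
  show "\<exists>y\<in>carrier (qe d). y \<oplus>\<^bsub>qe d\<^esub> x = \<zero>\<^bsub>qe d\<^esub>"
    using ab by (intro bexI[of _ "(\<ominus> a, \<ominus> b)"]) (simp_all add: qe_def l_neg)
qed (simp_all add: qe_def)

lemma qe_field:
  assumes d: "d \<in> carrier R" and nsq: "\<And>x. x \<in> carrier R \<Longrightarrow> x \<otimes> x \<noteq> d"
  shows "field (qe d)"
proof -
  interpret Q: cring "qe d" by (rule qe_cring[OF d])
  show ?thesis
  proof (rule Q.cring_fieldI2)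
    show "\<zero>\<^bsub>qe d\<^esub> \<noteq> \<one>\<^bsub>qe d\<^esub>" by (simp add: qe_def)
  next
    fix x assume x: "x \<in> carrier (qe d)" "x \<noteq> \<zero>\<^bsub>qe d\<^esub>"
    obtain a b where ab: "x = (a, b)" "a \<in> carrier R" "b \<in> carrier R" using x by (auto simp: qe_def)
    have nz: "a \<noteq> \<zero> \<or> b \<noteq> \<zero>" using x ab by (auto simp: qe_def)
    define N where "N = a \<otimes> a \<ominus> d \<otimes> (b \<otimes> b)"
    have N: "N \<in> carrier R" unfolding N_def using ab d by simp
    have Nnz: "N \<noteq> \<zero>"
    proof
      assume N0: "N = \<zero>"
      show False
      proof (cases "b = \<zero>")
        case True
        then have "a \<otimes> a = \<zero>" using N0 ab d unfolding N_def by simp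
        then have "a = \<zero>" using ab integral by blast
        then show False using nz True by simp
      next
        case False
        then have bu: "b \<in> Units R" using ab field_Units by simp
        have "a \<otimes> a = (a \<otimes> a \<ominus> d \<otimes> (b \<otimes> b)) \<oplus> d \<otimes> (b \<otimes> b)"
          using ab d by algebra
        then have "a \<otimes> a = d \<otimes> (b \<otimes> b)" using N0 ab d unfolding N_def by simp
        have ib: "inv b \<in> carrier R" using Units_inv_closed[OF bu] .
        have "(a \<otimes> inv b) \<otimes> (a \<otimes> inv b) = (a \<otimes> a) \<otimes> (inv b \<otimes> inv b)"
          using ab ib by algebra
        also have "\<dots> = d \<otimes> (b \<otimes> b) \<otimes> (inv b \<otimes> inv b)" using \<open>a \<otimes> a = d \<otimes> (b \<otimes> b)\<close> by simp
        also have "\<dots> = d \<otimes> ((b \<otimes> inv b) \<otimes> (b \<otimes> inv b))" using ab ib d by algebra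
        finally have "(a \<otimes> inv b) \<otimes> (a \<otimes> inv b) = d \<otimes> ((b \<otimes> inv b) \<otimes> (b \<otimes> inv b))" .
        then have "(a \<otimes> inv b) \<otimes> (a \<otimes> inv b) = d"
          using bu d by simp
        then show False using nsq[of "a \<otimes> inv b"] ab Units_inv_closed[OF bu] by simp
      qed
    qed
    then have Nu: "N \<in> Units R" using N field_Units by simp
    define u where "u = inv N"
    have u: "u \<in> carrier R" "N \<otimes> u = \<one>" unfolding u_def using Nu by simp_all
    show "\<exists>y\<in>carrier (qe d). x \<otimes>\<^bsub>qe d\<^esub> y = \<one>\<^bsub>qe d\<^esub>"
    proof (intro bexI[of _ "(a \<otimes> u, \<ominus> b \<otimes> u)"])
      show "(a \<otimes> u, \<ominus> b \<otimes> u) \<in> carrier (qe d)" using ab u by (simp add: qe_def)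
      have e1: "a \<otimes> (a \<otimes> u) \<oplus> d \<otimes> (b \<otimes> (\<ominus> b \<otimes> u)) = N \<otimes> u"
        unfolding N_def using ab u d by algebra
      have e2: "a \<otimes> (\<ominus> b \<otimes> u) \<oplus> b \<otimes> (a \<otimes> u) = \<zero>"
        using ab u d by algebra
      show "x \<otimes>\<^bsub>qe d\<^esub> (a \<otimes> u, \<ominus> b \<otimes> u) = \<one>\<^bsub>qe d\<^esub>"
        using e1 e2 u unfolding ab by (simp add: qe_def)
    qed
  qed
qed

lemma qe_card:
  assumes "finite (carrier R)"
  shows "finite (carrier (qe d))" "card (carrier (qe d)) = card (carrier R) * card (carrier R)"
  using assms by (simp_all add: qe_def card_cartesian_product)

lemma nonsquare_exists:
  assumes fin: "finite (carrier R)" and one: "\<one> \<noteq> \<ominus> \<one>"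
  shows "\<exists>d\<in>carrier R. \<forall>x\<in>carrier R. x \<otimes> x \<noteq> d"
proof (rule ccontr)
  assume "\<not> ?thesis"
  then have all: "\<forall>d\<in>carrier R. \<exists>x\<in>carrier R. x \<otimes> x = d" by blast
  have "(\<lambda>x. x \<otimes> x) ` carrier R = carrier R"
    using all by (auto intro: m_closed)
  then have "inj_on (\<lambda>x. x \<otimes> x) (carrier R)"
    using fin by (intro eq_card_imp_inj_on) simp_all
  moreover have "\<one> \<otimes> \<one> = \<ominus> \<one> \<otimes> \<ominus> \<one>" using one_closed by algebra
  ultimately have "\<one> = \<ominus> \<one>" by (meson inj_onD one_closed a_inv_closed)
  then show False using one by simp
qed

definition smul :: "'a \<Rightarrow> 'a \<times> 'a \<Rightarrow> 'a \<times> 'a" where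
  "smul c v = (c \<otimes> fst v, c \<otimes> snd v)"
definition vadd :: "'a \<times> 'a \<Rightarrow> 'a \<times> 'a \<Rightarrow> 'a \<times> 'a" where
  "vadd v w = (fst v \<oplus> fst w, snd v \<oplus> snd w)"
definition vsub :: "'a \<times> 'a \<Rightarrow> 'a \<times> 'a \<Rightarrow> 'a \<times> 'a" where
  "vsub v w = (fst v \<ominus> fst w, snd v \<ominus> snd w)"
definition lin :: "'a \<times> 'a \<Rightarrow> 'a \<times> 'a \<Rightarrow> 'a \<times> 'a \<Rightarrow> 'a \<times> 'a" where
  "lin v w x = vadd (smul (fst x) v) (smul (snd x) w)"

lemma lin_closed: "v \<in> carrier R \<times> carrier R \<Longrightarrow> w \<in> carrier R \<times> carrier R \<Longrightarrow> x \<in> carrier R \<times> carrier R \<Longrightarrow>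
    lin v w x \<in> carrier R \<times> carrier R"
  by (auto simp: lin_def vadd_def smul_def)

lemma lin_sub1:
  assumes "v \<in> carrier R \<times> carrier R" "w \<in> carrier R \<times> carrier R" "a \<in> carrier R" "a' \<in> carrier R" "b \<in> carrier R"
  shows "vsub (lin v w (a', b)) (lin v w (a, b)) = smul (a' \<ominus> a) v"
  using assms by (cases v, cases w) (simp add: lin_def vadd_def smul_def vsub_def, algebra)

lemma lin_sub2:
  assumes "v \<in> carrier R \<times> carrier R" "w \<in> carrier R \<times> carrier R" "a \<in> carrier R" "b' \<in> carrier R" "b \<in> carrier R"
  shows "vsub (lin v w (a, b')) (lin v w (a, b)) = smul (b' \<ominus> b) w"
  using assms by (cases v, cases w) (simp add: lin_def vadd_def smul_def vsub_def, algebra)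

lemma lin_add1:
  assumes "v \<in> carrier R \<times> carrier R" "w \<in> carrier R \<times> carrier R" "a \<in> carrier R" "c \<in> carrier R" "b \<in> carrier R"
  shows "lin v w (a \<oplus> c, b) = vadd (lin v w (a, b)) (smul c v)"
  using assms by (cases v, cases w) (simp add: lin_def vadd_def smul_def, algebra)

lemma lin_add2:
  assumes "v \<in> carrier R \<times> carrier R" "w \<in> carrier R \<times> carrier R" "a \<in> carrier R" "c \<in> carrier R" "b \<in> carrier R"
  shows "lin v w (a, b \<oplus> c) = vadd (lin v w (a, b)) (smul c w)"
  using assms by (cases v, cases w) (simp add: lin_def vadd_def smul_def, algebra)

lemma addl_cancelR:
  assumes "x \<oplus> y = x \<oplus> z" "x \<in> carrier R" "y \<in> carrier R" "z \<in> carrier R"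
  shows "y = z"
proof -
  have "y = \<ominus> x \<oplus> (x \<oplus> y)" using assms(2-4) by algebra
  also have "\<dots> = \<ominus> x \<oplus> (x \<oplus> z)" using assms by simp
  also have "\<dots> = z" using assms(2-4) by algebra
  finally show ?thesis .
qed

lemma sub_zeroR:
  assumes "x \<ominus> y = \<zero>" "x \<in> carrier R" "y \<in> carrier R"
  shows "x = y"
proof -
  have "x = (x \<ominus> y) \<oplus> y" using assms(2,3) by algebra
  then show ?thesis using assms by simp
qed

lemma add_sub_cancelR: "x \<in> carrier R \<Longrightarrow> y \<in> carrier R \<Longrightarrow> x \<oplus> (y \<ominus> x) = y"
  by algebra

lemma vadd_vsub: "P \<in> carrier R \<times> carrier R \<Longrightarrow> Q \<in> carrier R \<times> carrier R \<Longrightarrow> vadd P (vsub Q P) = Q"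
  by (cases P, cases Q) (simp add: vadd_def vsub_def add_sub_cancelR)

lemma vsub_zero: "P \<in> carrier R \<times> carrier R \<Longrightarrow> Q \<in> carrier R \<times> carrier R \<Longrightarrow> vsub Q P = (\<zero>, \<zero>) \<Longrightarrow> Q = P"
  using vadd_vsub[of P Q] by (cases P) (simp add: vadd_def)

lemma lin_inj:
  assumes v: "v = (\<one>, s)" "s \<in> carrier R"
    and w: "(w = (\<one>, s') \<and> s' \<in> carrier R \<and> s' \<noteq> s) \<or> w = (\<zero>, \<one>)"
  shows "inj_on (lin v w) (carrier R \<times> carrier R)"
proof (rule inj_onI)
  fix x y assume x: "x \<in> carrier R \<times> carrier R" and y: "y \<in> carrier R \<times> carrier R" and eq: "lin v w x = lin v w y"
  obtain a b a' b' where ab: "x = (a, b)" "y = (a', b')" by fastforce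
  have c: "a \<in> carrier R" "b \<in> carrier R" "a' \<in> carrier R" "b' \<in> carrier R" using x y ab by auto
  from w show "x = y"
  proof
    assume w1: "w = (\<one>, s') \<and> s' \<in> carrier R \<and> s' \<noteq> s"
    have e1: "a \<oplus> b = a' \<oplus> b'" and e2: "a \<otimes> s \<oplus> b \<otimes> s' = a' \<otimes> s \<oplus> b' \<otimes> s'"
      using eq c v w1 unfolding ab by (auto simp: lin_def vadd_def smul_def m_comm)
    have "(b \<ominus> b') \<otimes> (s' \<ominus> s) = (a \<otimes> s \<oplus> b \<otimes> s' \<ominus> (a' \<otimes> s \<oplus> b' \<otimes> s')) \<ominus> (a \<oplus> b \<ominus> (a' \<oplus> b')) \<otimes> s"
      using c v w1 by algebra
    also have "\<dots> = \<zero>" unfolding e1 e2 using c v w1 by algebra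
    finally have "(b \<ominus> b') \<otimes> (s' \<ominus> s) = \<zero>" .
    moreover have "s' \<ominus> s \<noteq> \<zero>" using w1 v sub_zeroR by blast
    ultimately have "b \<ominus> b' = \<zero>" using integral c v w1 by blast
    then have bb: "b = b'" using c sub_zeroR by blast
    then have "b \<oplus> a = b \<oplus> a'" using e1 c by (simp add: a_comm)
    then have "a = a'" using c addl_cancelR by blast
    then show "x = y" using ab bb by simp
  next
    assume w2: "w = (\<zero>, \<one>)"
    have e1: "a = a'" using eq c v w2 unfolding ab by (simp add: lin_def vadd_def smul_def)
    then have "a \<otimes> s \<oplus> b = a \<otimes> s \<oplus> b'" using eq c v w2 unfolding ab by (simp add: lin_def vadd_def smul_def)
    then have "b = b'" using c v addl_cancelR[of "a \<otimes> s" b b'] by simp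
    then show "x = y" using ab e1 by simp
  qed
qed

lemma lin_bij:
  assumes fin: "finite (carrier R)" and v: "v = (\<one>, s)" "s \<in> carrier R"
    and w: "(w = (\<one>, s') \<and> s' \<in> carrier R \<and> s' \<noteq> s) \<or> w = (\<zero>, \<one>)"
  shows "bij_betw (lin v w) (carrier R \<times> carrier R) (carrier R \<times> carrier R)"
proof -
  have wc: "w \<in> carrier R \<times> carrier R" using w by auto
  have vc: "v \<in> carrier R \<times> carrier R" using v by auto
  have sub: "lin v w ` (carrier R \<times> carrier R) \<subseteq> carrier R \<times> carrier R"
    using lin_closed[OF vc wc] by blast
  show ?thesis unfolding bij_betw_def
    using lin_inj[OF v w] endo_inj_surj[OF _ sub] fin by simp
qed

definition dv :: "(nat \<Rightarrow> 'a) \<Rightarrow> nat \<Rightarrow> nat \<Rightarrow> 'a \<times> 'a" where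
  "dv e n r = (if r < n then (\<one>, e r) else (\<zero>, \<one>))"

lemma dv_closed: "bij_betw e {0..<n} (carrier R) \<Longrightarrow> dv e n r \<in> carrier R \<times> carrier R"
  by (auto simp: dv_def bij_betw_def)

lemma dir_exists:
  assumes e: "bij_betw e {0..<n} (carrier R)" and D: "D \<in> carrier R \<times> carrier R" "D \<noteq> (\<zero>, \<zero>)"
  shows "\<exists>r\<le>n. \<exists>c\<in>carrier R. D = smul c (dv e n r)"
proof -
  obtain x y where xy: "D = (x, y)" "x \<in> carrier R" "y \<in> carrier R" using D by auto
  show ?thesis
  proof (cases "x = \<zero>")
    case True
    then show ?thesis using xy by (intro exI[of _ n] conjI bexI[of _ y]) (simp_all add: dv_def smul_def)
  next
    case False
    then have xu: "x \<in> Units R" using xy field_Units by simp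
    have sc: "y \<otimes> inv x \<in> carrier R" using xy xu by simp
    then obtain r where r: "r < n" "e r = y \<otimes> inv x" using e unfolding bij_betw_def
      by (metis atLeastLessThan_iff imageE)
    have ix: "inv x \<in> carrier R" "x \<otimes> inv x = \<one>" using xu by simp_all
    have "x \<otimes> (y \<otimes> inv x) = y \<otimes> (x \<otimes> inv x)" using xy ix(1) by algebra
    then have "x \<otimes> (y \<otimes> inv x) = y" using xy ix by simp
    then have "D = smul x (dv e n r)" using xy r by (simp add: dv_def smul_def)
    moreover have "r \<le> n" using r by simp
    ultimately show ?thesis using xy(2) by blast
  qed
qed

lemma dir_unique:
  assumes e: "bij_betw e {0..<n} (carrier R)" and r: "r \<le> n" "r' \<le> n" and c: "c \<in> carrier R" "c' \<in> carrier R"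
    and eq: "smul c (dv e n r) = smul c' (dv e n r')" and nz: "smul c (dv e n r) \<noteq> (\<zero>, \<zero>)"
  shows "r = r'"
proof -
  have er: "e r \<in> carrier R" if "r < n" for r using e that by (auto simp: bij_betw_def)
  show ?thesis
  proof (cases "r < n")
    case True
    show ?thesis
    proof (cases "r' < n")
      case True': True
      have cc: "c = c'" using eq True True' c by (simp add: dv_def smul_def)
      have cnz: "c \<noteq> \<zero>" using nz True er[OF True] by (auto simp: dv_def smul_def)
      have "c \<otimes> e r = c \<otimes> e r'" using eq True True' cc by (simp add: dv_def smul_def)
      then have "e r = e r'"
        using cnz c er True True' field_Units m_lcancel by (metis Diff_iff empty_iff insert_iff Units_l_cancel)
      then show ?thesis using e True True' unfolding bij_betw_def inj_on_def by auto
    next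
      case False
      then have "c = \<zero>" using eq True c by (simp add: dv_def smul_def)
      then show ?thesis using nz True er[OF True] by (simp add: dv_def smul_def)
    qed
  next
    case False
    then have rn: "r = n" using r by simp
    show ?thesis
    proof (cases "r' < n")
      case True
      then have "c' = \<zero>" using eq False c by (simp add: dv_def smul_def)
      then have "smul c' (dv e n r') = (\<zero>, \<zero>)" using True er[OF True] by (simp add: dv_def smul_def)
      then show ?thesis using nz eq by simp
    next
      case False
      then show ?thesis using rn r by simp
    qed
  qed
qed

lemma affine_main:
  assumes fin: "finite (carrier R)" and cardR: "card (carrier R) = 2 * m + 1" and m: "1 \<le> m"
  shows "edge_partition_into (complete_graph ((2 * m + 1) * (2 * m + 1)))
           (cart_prod (cycle_graph (2 * m + 1)) (cycle_graph (2 * m + 1))) ((m + 1) * m)"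
proof -
  define n where "n = 2 * m + 1"
  define A where "A = carrier R"
  define V where "V = A \<times> A"
  obtain e where e: "bij_betw e {0..<n} A" using ex_bij_betw_nat_finite[OF fin] cardR unfolding n_def A_def by auto
  have cardV: "card V = n * n" using cardR fin unfolding n_def V_def A_def by (simp add: card_cartesian_product)
  have finV: "finite V" using fin unfolding V_def A_def by simp
  obtain enc where enc: "bij_betw enc V {0..<n * n}" using ex_bij_betw_finite_nat[OF finV] cardV by auto
  define L where "L t = lin (dv e n (2 * t)) (dv e n (Suc (2 * t)))" for t
  define \<phi> where "\<phi> t x = enc (L t x)" for t x
  define h where "h k a = e (ww m k a)" for k a
  define iv where "iv = inv_into V enc"
  have eA: "e r \<in> A" if "r < n" for r using e that by (auto simp: bij_betw_def)
  have einj: "e r = e r' \<longleftrightarrow> r = r'" if "r < n" "r' < n" for r r'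
    using e that by (auto simp: bij_betw_def inj_on_def)
  have dvc: "dv e n r \<in> V" for r using dv_closed e unfolding V_def A_def by blast
  have Lbij: "bij_betw (L t) V V" if t: "t < m + 1" for t
  proof -
    have t2: "2 * t < n" using t unfolding n_def by simp
    have v: "dv e n (2 * t) = (\<one>, e (2 * t))" "e (2 * t) \<in> carrier R"
      using t2 eA unfolding dv_def A_def by auto
    have w: "(dv e n (Suc (2 * t)) = (\<one>, e (Suc (2 * t))) \<and> e (Suc (2 * t)) \<in> carrier R \<and> e (Suc (2 * t)) \<noteq> e (2 * t))
             \<or> dv e n (Suc (2 * t)) = (\<zero>, \<one>)"
    proof (cases "Suc (2 * t) < n")
      case True
      then show ?thesis using eA[OF True] einj[OF True t2] unfolding dv_def A_def by simp
    qed (simp add: dv_def)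
    show ?thesis unfolding L_def V_def A_def by (rule lin_bij[OF fin v w])
  qed
  have phi: "bij_betw (\<phi> t) V {0..<n * n}" if "t < m + 1" for t
  proof -
    have "\<phi> t = enc \<circ> L t" unfolding \<phi>_def by auto
    then show ?thesis using bij_betw_trans[OF Lbij[OF that] enc] by simp
  qed
  have ivV: "iv u \<in> V" "enc (iv u) = u" if "u < n * n" for u
  proof -
    have "u \<in> enc ` V" using enc that by (simp add: bij_betw_def)
    then show "iv u \<in> V" "enc (iv u) = u" unfolding iv_def by (simp_all add: inv_into_into f_inv_into_f)
  qed
  have iv_enc: "iv (enc P) = P" if "P \<in> V" for P
    using that enc unfolding iv_def bij_betw_def by (simp add: inv_into_f_f)
  have Lc: "L t x \<in> V" if "x \<in> V" for t x
    using lin_closed dvc that unfolding L_def V_def A_def by blast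
  have aldiff: "\<exists>r. (r = 2 * t \<or> r = Suc (2 * t)) \<and> (\<exists>c\<in>A. vsub (iv v) (iv u) = smul c (dv e n r))"
    if "al (\<phi> t) A u v" for t u v
  proof -
    from that obtain \<alpha> \<alpha>' \<beta> where ab: "\<alpha> \<in> A" "\<alpha>' \<in> A" "\<beta> \<in> A"
      and cs: "(u = \<phi> t (\<alpha>, \<beta>) \<and> v = \<phi> t (\<alpha>', \<beta>)) \<or> (u = \<phi> t (\<beta>, \<alpha>) \<and> v = \<phi> t (\<beta>, \<alpha>'))"
      unfolding al_def by blast
    from cs show ?thesis
    proof
      assume c: "u = \<phi> t (\<alpha>, \<beta>) \<and> v = \<phi> t (\<alpha>', \<beta>)"
      have "iv u = L t (\<alpha>, \<beta>)" "iv v = L t (\<alpha>', \<beta>)"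
        using c iv_enc Lc ab unfolding \<phi>_def V_def by auto
      then have "vsub (iv v) (iv u) = smul (\<alpha>' \<ominus> \<alpha>) (dv e n (2 * t))"
        unfolding L_def using lin_sub1 dvc ab unfolding V_def A_def by simp
      then show ?thesis using ab unfolding A_def by blast
    next
      assume c: "u = \<phi> t (\<beta>, \<alpha>) \<and> v = \<phi> t (\<beta>, \<alpha>')"
      have "iv u = L t (\<beta>, \<alpha>)" "iv v = L t (\<beta>, \<alpha>')"
        using c iv_enc Lc ab unfolding \<phi>_def V_def by auto
      then have "vsub (iv v) (iv u) = smul (\<alpha>' \<ominus> \<alpha>) (dv e n (Suc (2 * t)))"
        unfolding L_def using lin_sub2 dvc ab unfolding V_def A_def by simp
      then show ?thesis using ab unfolding A_def by blast
    qed
  qed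
  have alval: "u < n * n" "v < n * n" if "al (\<phi> t) A u v" "t < m + 1" for t u v
    using that phi[OF that(2)] unfolding al_def V_def bij_betw_def by auto
  have vsub_nz: "vsub (iv v) (iv u) \<noteq> (\<zero>, \<zero>)" if "u < n * n" "v < n * n" "u \<noteq> v" for u v
  proof
    assume "vsub (iv v) (iv u) = (\<zero>, \<zero>)"
    then have "iv v = iv u" using vsub_zero ivV that unfolding V_def A_def by blast
    then show False using ivV that by metis
  qed
  show ?thesis
    unfolding n_def[symmetric]
  proof (rule core[where A = A and \<phi> = \<phi> and h = h])
    show "2 \<le> n" using m unfolding n_def by simp
    show "0 < m" using m by simp
    show "bij_betw (\<phi> t) (A \<times> A) {0..<n * n}" if "t < m + 1" for t using phi[OF that] unfolding V_def .
  next
    fix u v assume uv: "u < n * n" "v < n * n" "u \<noteq> v"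
    define P where "P = iv u"
    define Q where "Q = iv v"
    have PQ: "P \<in> V" "Q \<in> V" "enc P = u" "enc Q = v" unfolding P_def Q_def using ivV uv by auto
    have D: "vsub Q P \<in> carrier R \<times> carrier R" "vsub Q P \<noteq> (\<zero>, \<zero>)"
      using PQ vsub_nz[OF uv] unfolding P_def Q_def V_def A_def by (auto simp: vsub_def)
    obtain r c where r: "r \<le> n" "c \<in> carrier R" "vsub Q P = smul c (dv e n r)"
      using dir_exists[OF e[unfolded A_def] D] by blast
    define t where "t = r div 2"
    have t: "t < m + 1" using r(1) unfolding t_def n_def by simp
    have "P \<in> L t ` V" using Lbij[OF t] PQ by (simp add: bij_betw_def)
    then obtain \<alpha> \<beta> where ab: "\<alpha> \<in> A" "\<beta> \<in> A" "P = L t (\<alpha>, \<beta>)" unfolding V_def by auto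
    have Q: "Q = vadd P (smul c (dv e n r))" using vadd_vsub[of P Q] PQ r unfolding V_def A_def by simp
    have "r = 2 * t \<or> r = Suc (2 * t)" unfolding t_def by presburger
    then have "al (\<phi> t) A u v"
    proof
      assume rt: "r = 2 * t"
      have "Q = L t (\<alpha> \<oplus> c, \<beta>)" unfolding Q ab(3) L_def rt
        using lin_add1 dvc ab r(2) unfolding V_def A_def by simp
      then have "u = \<phi> t (\<alpha>, \<beta>)" "v = \<phi> t (\<alpha> \<oplus> c, \<beta>)" using PQ ab unfolding \<phi>_def by auto
      moreover have "\<alpha> \<oplus> c \<in> A" using ab r(2) unfolding A_def by simp
      ultimately show ?thesis unfolding al_def using ab by blast
    next
      assume rt: "r = Suc (2 * t)"
      have "Q = L t (\<alpha>, \<beta> \<oplus> c)" unfolding Q ab(3) L_def rt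
        using lin_add2 dvc ab r(2) unfolding V_def A_def by simp
      then have "u = \<phi> t (\<alpha>, \<beta>)" "v = \<phi> t (\<alpha>, \<beta> \<oplus> c)" using PQ ab unfolding \<phi>_def by auto
      moreover have "\<beta> \<oplus> c \<in> A" using ab r(2) unfolding A_def by simp
      ultimately show ?thesis unfolding al_def using ab by blast
    qed
    then show "\<exists>t<m + 1. al (\<phi> t) A u v" using t by blast
  next
    fix t t' u v assume tt: "t < m + 1" "t' < m + 1" and uv: "u \<noteq> v"
      and al1: "al (\<phi> t) A u v" and al2: "al (\<phi> t') A u v"
    obtain r c where r: "r = 2 * t \<or> r = Suc (2 * t)" "c \<in> A" "vsub (iv v) (iv u) = smul c (dv e n r)"
      using aldiff[OF al1] by blast
    obtain r' c' where r': "r' = 2 * t' \<or> r' = Suc (2 * t')" "c' \<in> A" "vsub (iv v) (iv u) = smul c' (dv e n r')"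
      using aldiff[OF al2] by blast
    have nz: "smul c (dv e n r) \<noteq> (\<zero>, \<zero>)" using vsub_nz[OF alval[OF al1 tt(1)] uv] r(3) by simp
    have rn: "r \<le> n" "r' \<le> n" using r(1) r'(1) tt unfolding n_def by auto
    have "r = r'" using dir_unique[OF e[unfolded A_def] rn] r r' nz unfolding A_def by simp
    then show "t = t'" using r(1) r'(1) by auto
  next
    fix k assume k: "k < m"
    show "bij_betw (h k) {0..<n} A"
    proof -
      have "h k = e \<circ> ww m k" unfolding h_def by auto
      moreover have "bij_betw (ww m k) {0..<n} {0..<n}" using ww_bij[OF _ k] m unfolding n_def by simp
      ultimately show ?thesis using bij_betw_trans[OF _ e] by simp
    qed
  next
    fix x y assume xy: "x \<in> A" "y \<in> A" "x \<noteq> y"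
    obtain x0 y0 where x0: "x0 < n" "x = e x0" and y0: "y0 < n" "y = e y0"
      using e xy unfolding bij_betw_def by (metis atLeastLessThan_iff imageE)
    have "x0 \<noteq> y0" using xy x0 y0 by auto
    then obtain k a where ka: "k < m" "a < n" "{x0, y0} = {ww m k a, ww m k (Suc a mod n)}"
      using ww_cover[of m x0 y0] m x0 y0 unfolding n_def by auto
    have "{x, y} = e ` {x0, y0}" using x0 y0 by simp
    also have "\<dots> = e ` {ww m k a, ww m k (Suc a mod n)}" using ka(3) by simp
    also have "\<dots> = {h k a, h k (Suc a mod n)}" by (simp add: h_def)
    finally have "{x, y} = {h k a, h k (Suc a mod n)}" .
    then show "\<exists>k<m. \<exists>a<n. {x, y} = {h k a, h k (Suc a mod n)}" using ka by blast
  next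
    fix k k' a a' assume k: "k < m" "k' < m" and a: "a < n" "a' < n"
      and eq: "{h k a, h k (Suc a mod n)} = {h k' a', h k' (Suc a' mod n)}"
    have wl: "ww m kk b < n" if "kk < m" for kk b
      using ww_lt[of m b kk] m that unfolding n_def by (cases "b = 0") (auto simp: ww_0)
    have "{ww m k a, ww m k (Suc a mod n)} = {ww m k' a', ww m k' (Suc a' mod n)}"
      using eq unfolding h_def doubleton_eq_iff by (simp add: einj wl k)
    then show "k = k'" using ww_uniq[OF k] a unfolding n_def by blast
  qed
qed

end



theorem theorem2:
  fixes p :: nat
  assumes "prime p" and "odd p"
  shows "edge_partition_into (complete_graph (p ^ 4))
           (cart_prod (cycle_graph (p ^ 2)) (cycle_graph (p ^ 2))) ((p ^ 4 - 1) div 4)"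
proof -
  interpret Rp: residues_prime p "residue_ring (int p)"
    by (simp add: residues_prime_def assms(1))
  have p2: "p \<ge> 2" using assms(1) prime_ge_2_nat by blast
  have p3: "p \<ge> 3" using p2 assms(2) by (cases "p = 2") auto
  have finR: "finite (carrier (residue_ring (int p)))" by (simp add: Rp.res_carrier_eq)
  have cardR: "card (carrier (residue_ring (int p))) = p" using p2 by (simp add: Rp.res_carrier_eq)
  have one: "\<one>\<^bsub>residue_ring (int p)\<^esub> \<noteq> \<ominus>\<^bsub>residue_ring (int p)\<^esub> \<one>\<^bsub>residue_ring (int p)\<^esub>"
  proof
    assume "\<one>\<^bsub>residue_ring (int p)\<^esub> = \<ominus>\<^bsub>residue_ring (int p)\<^esub> \<one>\<^bsub>residue_ring (int p)\<^esub>"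
    then have "int p = 2" by (rule Rp.one_eq_neg_one)
    then show False using assms(2) by simp
  qed
  obtain d where d: "d \<in> carrier (residue_ring (int p))"
    "\<And>x. x \<in> carrier (residue_ring (int p)) \<Longrightarrow> x \<otimes>\<^bsub>residue_ring (int p)\<^esub> x \<noteq> d"
    using Rp.nonsquare_exists[OF finR one] by blast
  interpret Q: field "Rp.qe d" by (rule Rp.qe_field[OF d])
  define m where "m = (p * p - 1) div 2"
  have pp: "p * p = 2 * m + 1"
  proof -
    have "odd (p * p)" using assms(2) by simp
    then show ?thesis unfolding m_def by presburger
  qed
  have "3 * 3 \<le> p * p" using mult_le_mono[OF p3 p3] .
  then have m1: "1 \<le> m" using pp by linarith
  have finQ: "finite (carrier (Rp.qe d))" and cardQ: "card (carrier (Rp.qe d)) = 2 * m + 1"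
    using Rp.qe_card[OF finR, of d] cardR pp by simp_all
  have main: "edge_partition_into (complete_graph ((2 * m + 1) * (2 * m + 1)))
           (cart_prod (cycle_graph (2 * m + 1)) (cycle_graph (2 * m + 1))) ((m + 1) * m)"
    by (rule Q.affine_main[OF finQ cardQ m1])
  have e1: "p ^ 2 = 2 * m + 1" using pp by (simp add: power2_eq_square)
  have "p ^ 4 = (p * p) * (p * p)" by (simp add: power4_eq_xxxx mult.assoc)
  then have e2: "p ^ 4 = (2 * m + 1) * (2 * m + 1)" using pp by simp
  have e3: "((2 * m + 1) * (2 * m + 1) - 1) div 4 = (m + 1) * m"
  proof -
    have "(2 * m + 1) * (2 * m + 1) - 1 = 4 * ((m + 1) * m)" by (simp add: algebra_simps)
    then show ?thesis by simp
  qed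
  show ?thesis unfolding e1 e2 e3 using main .
qed


end
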